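(* Let $1\le r\le s\le t$ and let $u=ABCd$, $v=A'B'C'd'$ be distinct vertices of $E3C(r,s,t)$ with $A=A'$, $B=B'$ and $d=d'$ (any $d\in\{0,1,2\}$). Then there exist $2r+2$ pairwise internally disjoint $u$–$v$ paths in $E3C(r,s,t)$, each of length at most $t+6$.
   Context: The exchanged 3-ary $n$-cube $E3C(r,s,t)$ ($r,s,t\ge1$, $n=r+s+t+1$): vertices are strings written $x=ABCd$ with $A\in\{0,1,2\}^r$, $B\in\{0,1,2\}^s$, $C\in\{0,1,2\}^t$, $d\in\{0,1,2\}$. Two distinct vertices $x=ABCd$, $y=A'B'C'd'$ are adjacent iff one of: (E0) $A=A',B=B',C=C'$ and $d\ne d'$; (E1) $d=d'=0$, $A=A'$, $B=B'$ and $C,C'$ differ in exactly one position; (E2) $d=d'=1$, $A=A'$, $C=C'$ and $B,B'$ differ in exactly one position; (E3) $d=d'=2$, $B=B'$, $C=C'$ and $A,A'$ differ in exactly one position. Paths are internally disjoint if they share no vertices other than their endpoints; length = number of edges. *)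

theory Defs
  imports Main
begin

definition tstr :: "nat \<Rightarrow> nat list \<Rightarrow> bool" where
  "tstr n X \<longleftrightarrow> length X = n \<and> set X \<subseteq> {0,1,2}"

definition differ_one :: "nat list \<Rightarrow> nat list \<Rightarrow> bool" where
  "differ_one X Y \<longleftrightarrow> length X = length Y \<and>
     card {i. i < length X \<and> X ! i \<noteq> Y ! i} = 1"

type_synonym e3vert = "nat list \<times> nat list \<times> nat list \<times> nat"

definition e3c_vertices :: "nat \<Rightarrow> nat \<Rightarrow> nat \<Rightarrow> e3vert set" where
  "e3c_vertices r s t = {(A,B,C,d). tstr r A \<and> tstr s B \<and> tstr t C \<and> d \<in> {0,1,2}}"

definition e3c_adj :: "nat \<Rightarrow> nat \<Rightarrow> nat \<Rightarrow> e3vert \<Rightarrow> e3vert \<Rightarrow> bool" where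
  "e3c_adj r s t x y \<longleftrightarrow> x \<in> e3c_vertices r s t \<and> y \<in> e3c_vertices r s t \<and> x \<noteq> y \<and>
     (case x of (A,B,C,d) \<Rightarrow> case y of (A',B',C',d') \<Rightarrow>
        (A = A' \<and> B = B' \<and> C = C' \<and> d \<noteq> d')
      \<or> (d = 0 \<and> d' = 0 \<and> A = A' \<and> B = B' \<and> differ_one C C')
      \<or> (d = 1 \<and> d' = 1 \<and> A = A' \<and> C = C' \<and> differ_one B B')
      \<or> (d = 2 \<and> d' = 2 \<and> B = B' \<and> C = C' \<and> differ_one A A'))"

text \<open>A (simple) u-v path in E3C(r,s,t), as the list of its vertices; its length
  (number of edges) is length p - 1.\<close>
definition e3c_path :: "nat \<Rightarrow> nat \<Rightarrow> nat \<Rightarrow> e3vert \<Rightarrow> e3vert \<Rightarrow> e3vert list \<Rightarrow> bool" where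
  "e3c_path r s t u v p \<longleftrightarrow> p \<noteq> [] \<and> hd p = u \<and> last p = v \<and> distinct p \<and>
     set p \<subseteq> e3c_vertices r s t \<and>
     (\<forall>i. Suc i < length p \<longrightarrow> e3c_adj r s t (p ! i) (p ! Suc i))"

end

theory Submission
  imports Defs
begin


lemma successively_nth:
  "successively P xs \<longleftrightarrow> (\<forall>i. Suc i < length xs \<longrightarrow> P (xs!i) (xs!Suc i))"
proof (induction P xs rule: successively.induct)
  case (3 P x y xs)
  show ?case
  proof
    assume "successively P (x # y # xs)"
    then show "\<forall>i. Suc i < length (x # y # xs) \<longrightarrow> P ((x # y # xs) ! i) ((x # y # xs) ! Suc i)"
      using 3 by (auto simp: nth_Cons split: nat.splits)
  next
    assume H: "\<forall>i. Suc i < length (x # y # xs) \<longrightarrow> P ((x # y # xs) ! i) ((x # y # xs) ! Suc i)"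
    have "P x y" using H[rule_format, of 0] by simp
    moreover have "\<forall>i. Suc i < length (y # xs) \<longrightarrow> P ((y # xs) ! i) ((y # xs) ! Suc i)"
      using H by (metis Suc_less_eq length_Cons nth_Cons_Suc)
    ultimately show "successively P (x # y # xs)" using 3 by simp
  qed
qed auto

lemma e3c_path_alt:
  "e3c_path r s t u v p \<longleftrightarrow> p \<noteq> [] \<and> hd p = u \<and> last p = v \<and> distinct p \<and>
     set p \<subseteq> e3c_vertices r s t \<and> successively (e3c_adj r s t) p"
  unfolding e3c_path_def successively_nth by simp

lemma differ_one_upd:
  assumes "p < length X" "X!p \<noteq> c"
  shows "differ_one X (X[p:=c])" "differ_one (X[p:=c]) X"
proof -
  have "{i. i < length X \<and> X ! i \<noteq> X[p:=c] ! i} = {p}"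
    using assms by (auto simp: nth_list_update)
  moreover have "{i. i < length X \<and> X[p:=c] ! i \<noteq> X ! i} = {p}"
    using assms by (auto simp: nth_list_update)
  ultimately show "differ_one X (X[p:=c])" "differ_one (X[p:=c]) X"
    by (auto simp: differ_one_def)
qed

lemma differ_one_neq: "differ_one X Y \<Longrightarrow> X \<noteq> Y"
  by (auto simp: differ_one_def)

lemma tstr_upd: "tstr n X \<Longrightarrow> c < 3 \<Longrightarrow> tstr n (X[p:=c])"
  unfolding tstr_def using set_update_subset_insert[of X p c] by auto

lemma tstr_nth: "tstr n X \<Longrightarrow> j < n \<Longrightarrow> X!j < 3"
  unfolding tstr_def using nth_mem[of j X] by fastforce

lemma less3: "(x::nat) < 3 \<longleftrightarrow> x = 0 \<or> x = 1 \<or> x = 2" by auto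

lemma mod3_ne: "(x::nat) < 3 \<Longrightarrow> b < 2 \<Longrightarrow> x \<noteq> (x+1+b) mod 3"
  by (auto simp: less3 less_2_cases_iff)

lemma mod3_ne2: "(x::nat) < 3 \<Longrightarrow> b < 2 \<Longrightarrow> b' < 2 \<Longrightarrow> b \<noteq> b' \<Longrightarrow> (x+1+b) mod 3 \<noteq> (x+1+b') mod 3"
  by (auto simp: less3 less_2_cases_iff)

lemma tstr_nthI: "length X = n \<Longrightarrow> (\<And>j. j < n \<Longrightarrow> X!j < 3) \<Longrightarrow> tstr n X"
  unfolding tstr_def by (force simp: in_set_conv_nth less3)

lemma vert_iff: "(A,B,C,d) \<in> e3c_vertices r s t \<longleftrightarrow> tstr r A \<and> tstr s B \<and> tstr t C \<and> d < 3"
  unfolding e3c_vertices_def by auto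

lemma adjE0: "tstr r A \<Longrightarrow> tstr s B \<Longrightarrow> tstr t C \<Longrightarrow> d < 3 \<Longrightarrow> d' < 3 \<Longrightarrow> d \<noteq> d'
  \<Longrightarrow> e3c_adj r s t (A,B,C,d) (A,B,C,d')"
  unfolding e3c_adj_def by (auto simp: vert_iff)

lemma adjE1: "tstr r A \<Longrightarrow> tstr s B \<Longrightarrow> tstr t C \<Longrightarrow> tstr t C' \<Longrightarrow> differ_one C C'
  \<Longrightarrow> e3c_adj r s t (A,B,C,0) (A,B,C',0)"
  unfolding e3c_adj_def by (auto simp: vert_iff dest: differ_one_neq)

lemma adjE2: "tstr r A \<Longrightarrow> tstr s B \<Longrightarrow> tstr s B' \<Longrightarrow> tstr t C \<Longrightarrow> differ_one B B'
  \<Longrightarrow> e3c_adj r s t (A,B,C,1) (A,B',C,1)"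
  unfolding e3c_adj_def by (auto simp: vert_iff dest: differ_one_neq)

lemma adjE3: "tstr r A \<Longrightarrow> tstr r A' \<Longrightarrow> tstr s B \<Longrightarrow> tstr t C \<Longrightarrow> differ_one A A'
  \<Longrightarrow> e3c_adj r s t (A,B,C,2) (A',B,C,2)"
  unfolding e3c_adj_def by (auto simp: vert_iff dest: differ_one_neq)

lemma differ_one_sym: "differ_one X Y \<Longrightarrow> differ_one Y X"
proof -
  assume H: "differ_one X Y"
  then have L: "length X = length Y" and c: "card {i. i < length X \<and> X ! i \<noteq> Y ! i} = 1"
    by (auto simp: differ_one_def)
  have eq: "{i. i<length Y \<and> Y!i\<noteq>X!i} = {i. i<length X \<and> X!i \<noteq> Y!i}"
    using L by auto
  show ?thesis unfolding differ_one_def by (subst eq) (use L c in simp)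
qed

definition nbr :: "nat list \<Rightarrow> nat \<Rightarrow> nat list" where
  "nbr X i = X[i div 2 := (X!(i div 2) + 1 + i mod 2) mod 3]"

lemma nbr_props:
  assumes "tstr n X" "i < 2*n"
  shows "tstr n (nbr X i)" "differ_one X (nbr X i)" "nbr X i \<noteq> X"
proof -
  have p: "i div 2 < length X" using assms by (auto simp: tstr_def)
  have x3: "X!(i div 2) < 3" using tstr_nth assms p by (auto simp: tstr_def)
  have ne: "X!(i div 2) \<noteq> (X!(i div 2) + 1 + i mod 2) mod 3" using x3
    by (intro mod3_ne) auto
  show "tstr n (nbr X i)" unfolding nbr_def using assms by (intro tstr_upd) auto
  show "differ_one X (nbr X i)" unfolding nbr_def using differ_one_upd(1)[OF p ne] .
  then show "nbr X i \<noteq> X" using differ_one_neq by metis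
qed

lemma nbr_inj:
  assumes "tstr n X" "i < 2*n" "j < 2*n" "i \<noteq> j"
  shows "nbr X i \<noteq> nbr X j"
proof
  assume E: "nbr X i = nbr X j"
  have p: "i div 2 < length X" "j div 2 < length X" using assms by (auto simp: tstr_def)
  have x3: "X!(i div 2) < 3" using tstr_nth assms p by (auto simp: tstr_def)
  show False
  proof (cases "i div 2 = j div 2")
    case True
    then have "i mod 2 \<noteq> j mod 2" using assms(4) by (metis div_mod_decomp)
    then have "(X!(i div 2) + 1 + i mod 2) mod 3 \<noteq> (X!(i div 2) + 1 + j mod 2) mod 3"
      using x3 by (intro mod3_ne2) auto
    then show False using E p True unfolding nbr_def
      by (metis nth_list_update_eq)
  next
    case False
    have "nbr X i ! (i div 2) \<noteq> X ! (i div 2)" using nbr_props(2)[OF assms(1,2)]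
      unfolding nbr_def differ_one_def using p x3 
      by (metis nbr_def nbr_props(3)[OF assms(1,2)] list_update_id nth_list_update_eq)
    moreover have "nbr X j ! (i div 2) = X ! (i div 2)" using False unfolding nbr_def by simp
    ultimately show False using E by simp
  qed
qed




definition mixv :: "nat list \<Rightarrow> nat list \<Rightarrow> nat set \<Rightarrow> nat list" where
  "mixv X T S = map (\<lambda>j. if j \<in> S then T!j else X!j) [0..<length X]"

lemma length_mixv[simp]: "length (mixv X T S) = length X"
  by (simp add: mixv_def)

lemma nth_mixv[simp]: "j < length X \<Longrightarrow> mixv X T S ! j = (if j \<in> S then T!j else X!j)"
  by (simp add: mixv_def)

definition walk :: "nat list \<Rightarrow> nat list \<Rightarrow> nat list \<Rightarrow> nat list list" where
  "walk X T ps = map (\<lambda>i. mixv X T (set (take i ps))) [0..<Suc (length ps)]"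

definition dpos :: "nat list \<Rightarrow> nat list \<Rightarrow> nat set" where
  "dpos X T = {j. j < length X \<and> X!j \<noteq> T!j}"

lemma length_walk[simp]: "length (walk X T ps) = Suc (length ps)"
  by (simp add: walk_def)

lemma walk_nonempty[simp]: "walk X T ps \<noteq> []"
  by (simp add: walk_def)

lemma not_in_take_nth: "distinct ps \<Longrightarrow> i < length ps \<Longrightarrow> ps!i \<notin> set (take i ps)"
  by (auto simp: in_set_conv_nth nth_eq_iff_index_eq)

locale wk =
  fixes n :: nat and X T :: "nat list" and ps :: "nat list"
  assumes tX: "tstr n X" and tT: "tstr n T" and dps: "distinct ps" and sps: "set ps = dpos X T"
begin

lemma lX: "length X = n" and lT: "length T = n" using tX tT by (auto simp: tstr_def)

lemma hd_walk[simp]: "hd (walk X T ps) = X"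
proof -
  have "mixv X T {} = X" by (intro nth_equalityI) auto
  then show ?thesis by (simp add: walk_def upt_conv_Cons del: upt_Suc)
qed

lemma last_walk[simp]: "last (walk X T ps) = T"
proof -
  have "mixv X T (set ps) = T"
    using sps lX lT by (intro nth_equalityI) (auto simp: dpos_def)
  then show ?thesis by (simp add: walk_def last_map)
qed

lemma walk_set: "Y \<in> set (walk X T ps) \<Longrightarrow> tstr n Y \<and> (\<forall>j<n. Y!j = X!j \<or> Y!j = T!j)"
  unfolding walk_def using lX lT tstr_nth[OF tX] tstr_nth[OF tT]
  by (auto intro!: tstr_nthI)

lemma walk_distinct: "distinct (walk X T ps)"
  unfolding walk_def distinct_map
proof (intro conjI inj_onI)
  fix i i' assume i: "i \<in> set [0..<Suc (length ps)]" and i': "i' \<in> set [0..<Suc (length ps)]"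
    and E: "mixv X T (set (take i ps)) = mixv X T (set (take i' ps))"
  show "i = i'"
  proof (rule ccontr)
    assume "i \<noteq> i'"
    then consider "i < i'" | "i' < i" by linarith
    then show False
    proof cases
      case 1
      let ?p = "ps!i"
      have ip: "i < length ps" using 1 i' by auto
      have p1: "?p \<notin> set (take i ps)" using not_in_take_nth[OF dps ip] .
      have p2: "?p \<in> set (take i' ps)" using 1 ip i' by (auto simp: in_set_conv_nth)
      have pd: "?p \<in> dpos X T" using sps ip nth_mem by blast
      then have "?p < length X" "X!?p \<noteq> T!?p" by (auto simp: dpos_def)
      then show False using E p1 p2 by (metis nth_mixv)
    next
      case 2
      let ?p = "ps!i'"
      have ip: "i' < length ps" using 2 i by auto
      have p1: "?p \<notin> set (take i' ps)" using not_in_take_nth[OF dps ip] .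
      have p2: "?p \<in> set (take i ps)" using 2 ip i by (auto simp: in_set_conv_nth)
      have pd: "?p \<in> dpos X T" using sps ip nth_mem by blast
      then have "?p < length X" "X!?p \<noteq> T!?p" by (auto simp: dpos_def)
      then show False using E p1 p2 by (metis nth_mixv)
    qed
  qed
qed simp

lemma walk_step: "Suc i < length (walk X T ps) \<Longrightarrow> differ_one (walk X T ps ! i) (walk X T ps ! Suc i)"
proof -
  assume "Suc i < length (walk X T ps)"
  then have ip: "i < length ps" by simp
  let ?p = "ps!i"
  have tk: "set (take (Suc i) ps) = insert ?p (set (take i ps))"
    using ip by (simp add: take_Suc_conv_app_nth)
  have p1: "?p \<notin> set (take i ps)" using not_in_take_nth[OF dps ip] .
  have pd: "?p \<in> dpos X T" using sps ip nth_mem by blast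
  then have pl: "?p < length X" and pn: "X!?p \<noteq> T!?p" by (auto simp: dpos_def)
  have w1: "walk X T ps ! i = mixv X T (set (take i ps))" using ip
    by (simp add: walk_def nth_append del: upt_Suc)
  have w2: "walk X T ps ! Suc i = mixv X T (set (take (Suc i) ps))" using ip
    by (simp add: walk_def nth_append del: upt_Suc)
  have "{j. j < length X \<and> mixv X T (set (take i ps)) ! j \<noteq> mixv X T (set (take (Suc i) ps)) ! j} = {?p}"
    using tk p1 pl pn by auto
  then show ?thesis unfolding w1 w2 differ_one_def by simp
qed

lemma walk_succ: "successively differ_one (walk X T ps)"
  unfolding successively_nth using walk_step by blast

end

definition flat :: "nat list \<Rightarrow> nat list \<Rightarrow> nat list \<Rightarrow> nat list \<Rightarrow> nat list \<Rightarrow> (nat list \<times> nat list \<times> nat list \<times> nat) list" where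
  "flat A B X T ps = map (\<lambda>Y. (A,B,Y,0)) (walk X T ps)"

lemma flat_props:
  assumes "wk t X T ps" "tstr r A" "tstr s B"
  shows "e3c_path r s t (A,B,X,0) (A,B,T,0) (flat A B X T ps)"
    "length (flat A B X T ps) = Suc (length ps)"
    "x \<in> set (flat A B X T ps) \<Longrightarrow> \<exists>Y. x = (A,B,Y,0) \<and> tstr t Y \<and> (\<forall>j<t. Y!j = X!j \<or> Y!j = T!j)"
proof -
  interpret wk t X T ps by fact
  have sc: "successively (e3c_adj r s t) (flat A B X T ps)"
    unfolding flat_def successively_map
    by (rule successively_mono[OF walk_succ]) (use walk_set assms in \<open>auto intro!: adjE1\<close>)
  have d: "distinct (flat A B X T ps)"
    unfolding flat_def using walk_distinct by (simp add: distinct_map inj_on_def)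
  have st: "set (flat A B X T ps) \<subseteq> e3c_vertices r s t"
    unfolding flat_def using walk_set assms by (auto simp: vert_iff)
  show "e3c_path r s t (A,B,X,0) (A,B,T,0) (flat A B X T ps)"
    unfolding e3c_path_alt using sc d st by (simp add: flat_def hd_map last_map)
  show "length (flat A B X T ps) = Suc (length ps)" by (simp add: flat_def)
  show "x \<in> set (flat A B X T ps) \<Longrightarrow> \<exists>Y. x = (A,B,Y,0) \<and> tstr t Y \<and> (\<forall>j<t. Y!j = X!j \<or> Y!j = T!j)"
    unfolding flat_def using walk_set by auto
qed




definition lp :: "nat \<Rightarrow> nat \<Rightarrow> nat list \<Rightarrow> nat list \<Rightarrow> nat list \<Rightarrow> nat list \<Rightarrow> nat list \<Rightarrow> nat list \<Rightarrow> nat list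
   \<Rightarrow> e3vert list" where
  "lp d e A B A1 B1 X T ps = (A,B,X,d) # (if e = d then [] else [(A,B,X,e)]) @ [(A1,B1,X,e)] @
     flat A1 B1 X T ps @ [(A1,B1,T,e)] @ (if e = d then [] else [(A,B,T,e)]) @ [(A,B,T,d)]"

definition lcond :: "nat \<Rightarrow> nat \<Rightarrow> nat \<Rightarrow> nat list \<Rightarrow> nat list \<Rightarrow> nat list \<Rightarrow> nat list \<Rightarrow> bool" where
  "lcond r s e A B A1 B1 \<longleftrightarrow> (e = 1 \<and> A1 = A \<and> differ_one B B1 \<and> tstr s B1) \<or>
                           (e = 2 \<and> B1 = B \<and> differ_one A A1 \<and> tstr r A1)"

lemma lcond_adj:
  assumes "lcond r s e A B A1 B1" "tstr r A" "tstr s B" "tstr t Y"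
  shows "e3c_adj r s t (A,B,Y,e) (A1,B1,Y,e)" "e3c_adj r s t (A1,B1,Y,e) (A,B,Y,e)"
    "tstr r A1" "tstr s B1" "(A1,B1) \<noteq> (A,B)" "e = 1 \<or> e = 2"
  using assms unfolding lcond_def
  by (auto intro: adjE2[unfolded One_nat_def] adjE3 differ_one_sym dest: differ_one_neq)

lemma lp_props:
  assumes lc: "lcond r s e A B A1 B1" and tA: "tstr r A" and tB: "tstr s B" and w: "wk t X T ps"
    and XT: "X \<noteq> T" and d: "d < 3"
  shows "e3c_path r s t (A,B,X,d) (A,B,T,d) (lp d e A B A1 B1 X T ps)"
    "length (lp d e A B A1 B1 X T ps) \<le> length ps + 7"
    "set (lp d e A B A1 B1 X T ps) \<subseteq> {(A,B,X,d),(A,B,T,d),(A,B,X,e),(A,B,T,e)} \<union> {x. fst x = A1 \<and> fst (snd x) = B1}"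
proof -
  interpret wk t X T ps by fact
  note L = lcond_adj[OF lc tA tB tX]
  have tX': "tstr t X" "tstr t T" using tX tT .
  note F = flat_props[OF w L(3) L(4)]
  have F1: "flat A1 B1 X T ps \<noteq> []" "hd (flat A1 B1 X T ps) = (A1,B1,X,0)"
    "last (flat A1 B1 X T ps) = (A1,B1,T,0)" "distinct (flat A1 B1 X T ps)"
    "set (flat A1 B1 X T ps) \<subseteq> e3c_vertices r s t"
    "successively (e3c_adj r s t) (flat A1 B1 X T ps)"
    using F(1) unfolding e3c_path_alt by auto
  have e12: "e = 1 \<or> e = 2" using L by simp
  have a1: "e3c_adj r s t (A1,B1,X,e) (A1,B1,X,0)" "e3c_adj r s t (A1,B1,T,0) (A1,B1,T,e)"
    using e12 L tX tT by (auto intro!: adjE0)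
  have a2: "e3c_adj r s t (A,B,X,d) (A,B,X,e)" "e3c_adj r s t (A,B,T,e) (A,B,T,d)" if "e \<noteq> d"
    using e12 that d tX tT tA tB by (auto intro!: adjE0)
  have a3: "e3c_adj r s t (A,B,X,e) (A1,B1,X,e)" "e3c_adj r s t (A1,B1,T,e) (A,B,T,e)"
    using lcond_adj[OF lc tA tB tX] lcond_adj[OF lc tA tB tT] by auto
  have fs: "x \<in> set (flat A1 B1 X T ps) \<Longrightarrow> fst x = A1 \<and> fst (snd x) = B1 \<and> snd (snd (snd x)) = 0" for x
    using F(3) by fastforce
  have fs': "(a,b,c,dd) \<in> set (flat A1 B1 X T ps) \<Longrightarrow> a = A1 \<and> b = B1 \<and> dd = 0" for a b c dd
    using fs by fastforce
  have ne: "(A1,B1) \<noteq> (A,B)" using L by simp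
  have vs: "(A,B,X,d) \<in> e3c_vertices r s t" "(A,B,T,d) \<in> e3c_vertices r s t"
    "(A,B,X,e) \<in> e3c_vertices r s t" "(A,B,T,e) \<in> e3c_vertices r s t"
    "(A1,B1,X,e) \<in> e3c_vertices r s t" "(A1,B1,T,e) \<in> e3c_vertices r s t"
    using tA tB tX tT L d e12 by (auto simp: vert_iff)
  show "e3c_path r s t (A,B,X,d) (A,B,T,d) (lp d e A B A1 B1 X T ps)"
  proof (cases "e = d")
    case True
    show ?thesis unfolding e3c_path_alt lp_def using True F1 vs a1 a3 XT ne e12 fs
      by (auto simp: successively_append_iff successively_Cons dest!: fs')
  next
    case False
    show ?thesis unfolding e3c_path_alt lp_def using False F1 vs a1 a2 a3 XT ne e12 fs
      by (auto simp: successively_append_iff successively_Cons dest!: fs')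
  qed
  show "length (lp d e A B A1 B1 X T ps) \<le> length ps + 7"
    unfolding lp_def using F(2) by auto
  show "set (lp d e A B A1 B1 X T ps) \<subseteq> {(A,B,X,d),(A,B,T,d),(A,B,X,e),(A,B,T,e)} \<union> {x. fst x = A1 \<and> fst (snd x) = B1}"
    unfolding lp_def using fs by auto
qed




lemma path_ext:
  assumes "e3c_path r s t x y P" "e3c_adj r s t u x" "e3c_adj r s t y v" "u \<notin> set P" "v \<notin> set P" "u \<noteq> v"
  shows "e3c_path r s t u v (u # P @ [v])"
proof -
  have "u \<in> e3c_vertices r s t" "v \<in> e3c_vertices r s t" using assms(2,3) unfolding e3c_adj_def by auto
  then show ?thesis using assms unfolding e3c_path_alt
    by (auto simp: successively_append_iff successively_Cons)
qed

lemma assemble: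
  assumes "\<And>i. i < N \<Longrightarrow> e3c_path r s t u v (P i) \<and> length (P i) - 1 \<le> L"
    and "\<And>i. i < N \<Longrightarrow> set (P i) \<subseteq> {u,v} \<union> I i"
    and "\<And>i j. i < N \<Longrightarrow> j < N \<Longrightarrow> i \<noteq> j \<Longrightarrow> I i \<inter> I j = {}"
    and "\<And>i j. i < N \<Longrightarrow> j < N \<Longrightarrow> i \<noteq> j \<Longrightarrow> 3 \<le> length (P i) \<or> 3 \<le> length (P j)"
  shows "\<exists>P :: nat \<Rightarrow> e3vert list.
     (\<forall>i < N. e3c_path r s t u v (P i) \<and> length (P i) - 1 \<le> L) \<and>
     (\<forall>i < N. \<forall>j < N. i \<noteq> j \<longrightarrow> P i \<noteq> P j \<and> set (P i) \<inter> set (P j) \<subseteq> {u, v})"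
proof (intro exI[of _ P] conjI allI impI)
  fix i j assume ij: "i < N" "j < N" "i \<noteq> j"
  have si: "set (P i) \<inter> set (P j) \<subseteq> {u,v}" using assms(2)[OF ij(1)] assms(2)[OF ij(2)] assms(3)[OF ij] by blast
  then show "set (P i) \<inter> set (P j) \<subseteq> {u,v}" .
  show "P i \<noteq> P j"
  proof
    assume E: "P i = P j"
    have di: "distinct (P i)" "distinct (P j)" using assms(1) ij unfolding e3c_path_def by auto
    have "card (set (P i)) \<le> card {u,v}" using si E by (intro card_mono) auto
    also have "\<dots> \<le> 2" by (simp add: card_insert_le_m1)
    finally have "length (P i) \<le> 2" using distinct_card[OF di(1)] by simp
    then show False using assms(4)[OF ij] E by simp
  qed
qed (use assms(1) in auto)

locale E3 =
  fixes r s t :: nat and A B C C' :: "nat list" and d :: nat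
  assumes r1: "1 \<le> r" and rs: "r \<le> s" and st: "s \<le> t" and tA: "tstr r A" and tB: "tstr s B"
    and tC: "tstr t C" and tC': "tstr t C'" and dl: "d < 3" and CC: "C \<noteq> C'"
begin

definition ds where "ds = filter (\<lambda>j. C!j \<noteq> C'!j) [0..<t]"
definition k where "k = length ds"

lemma lC: "length C = t" and lC': "length C' = t" using tC tC' by (auto simp: tstr_def)

lemma set_ds: "set ds = {j. j < t \<and> C!j \<noteq> C'!j}" by (auto simp: ds_def)
lemma dist_ds: "distinct ds" by (simp add: ds_def)

lemma wk_main: "wk t C C' ds"
  by unfold_locales (auto simp: tC tC' dist_ds set_ds dpos_def lC)

lemma k_pos: "1 \<le> k"
proof -
  obtain j where "j < t" "C!j \<noteq> C'!j" using CC lC lC' nth_equalityI by metis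
  then have "j \<in> set ds" using set_ds by auto
  then show ?thesis unfolding k_def by (cases ds) auto
qed

lemma k_le: "k \<le> t" unfolding k_def ds_def by (metis diff_zero length_filter_le length_upt)

lemma nA: "i < 2*r \<Longrightarrow> tstr r (nbr A i) \<and> differ_one A (nbr A i) \<and> nbr A i \<noteq> A"
  using nbr_props[OF tA] by auto
lemma nB: "i < 2*s \<Longrightarrow> tstr s (nbr B i) \<and> differ_one B (nbr B i) \<and> nbr B i \<noteq> B"
  using nbr_props[OF tB] by auto

lemma lcA: "i < 2*r \<Longrightarrow> lcond r s 2 A B (nbr A i) B" using nA by (auto simp: lcond_def)
lemma lcB: "i < 2*s \<Longrightarrow> lcond r s 1 A B A (nbr B i)" using nB by (auto simp: lcond_def)

lemma uv: "(A,B,C,d) \<noteq> (A,B,C',d)" using CC by simp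

lemma lift_main:
  assumes "lcond r s e A B A1 B1"
  shows "e3c_path r s t (A,B,C,d) (A,B,C',d) (lp d e A B A1 B1 C C' ds) \<and>
      length (lp d e A B A1 B1 C C' ds) - 1 \<le> t + 6"
    "set (lp d e A B A1 B1 C C' ds) \<subseteq> {(A,B,C,d),(A,B,C',d),(A,B,C,e),(A,B,C',e)} \<union> {x. fst x = A1 \<and> fst (snd x) = B1}"
    "3 \<le> length (lp d e A B A1 B1 C C' ds)"
  using lp_props[OF assms tA tB wk_main CC dl] k_le unfolding k_def
  by (auto simp: lp_def)

definition direct where "direct = (A,B,C,d) # flat A B C C' ds @ [(A,B,C',d)]"

lemma direct_ok:
  assumes "d \<noteq> 0"
  shows "e3c_path r s t (A,B,C,d) (A,B,C',d) direct \<and> length direct - 1 \<le> t + 6"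
    "set direct \<subseteq> {(A,B,C,d),(A,B,C',d)} \<union> {x. \<exists>Y. x = (A,B,Y,0)}"
    "3 \<le> length direct"
proof -
  note F = flat_props[OF wk_main tA tB]
  have "e3c_path r s t (A,B,C,d) (A,B,C',d) direct" unfolding direct_def
    by (rule path_ext[OF F(1)]) (use assms dl tA tB tC tC' F(3) CC in \<open>auto intro!: adjE0\<close>)
  then show "e3c_path r s t (A,B,C,d) (A,B,C',d) direct \<and> length direct - 1 \<le> t + 6"
    using F(2) k_le unfolding direct_def k_def by auto
  show "set direct \<subseteq> {(A,B,C,d),(A,B,C',d)} \<union> {x. \<exists>Y. x = (A,B,Y,0)}"
    unfolding direct_def using F(3) by fastforce
  show "3 \<le> length direct" unfolding direct_def using F(2) by simp
qed


lemma case2: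
  assumes d2: "d = 2"
  shows "\<exists>P :: nat \<Rightarrow> e3vert list.
     (\<forall>i < 2*r+2. e3c_path r s t (A,B,C,d) (A,B,C',d) (P i) \<and> length (P i) - 1 \<le> t + 6) \<and>
     (\<forall>i < 2*r+2. \<forall>j < 2*r+2. i \<noteq> j \<longrightarrow>
        P i \<noteq> P j \<and> set (P i) \<inter> set (P j) \<subseteq> {(A,B,C,d), (A,B,C',d)})"
proof -
  have s0: "0 < 2*s" using r1 rs by simp
  define P where "P i = (if i < 2*r then lp d 2 A B (nbr A i) B C C' ds else if i = 2*r then direct
      else lp d 1 A B A (nbr B 0) C C' ds)" for i
  define I :: "nat \<Rightarrow> e3vert set" where "I i = (if i < 2*r then {x. fst x = nbr A i \<and> fst (snd x) = B}
      else if i = 2*r then {x. \<exists>Y. x = (A,B,Y,0)}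
      else {(A,B,C,1),(A,B,C',1)} \<union> {x. fst x = A \<and> fst(snd x) = nbr B 0})" for i
  show ?thesis
  proof (rule assemble[where I = I])
    fix i assume i: "i < 2*r+2"
    show "e3c_path r s t (A,B,C,d) (A,B,C',d) (P i) \<and> length (P i) - 1 \<le> t + 6"
      unfolding P_def using lift_main(1)[OF lcA] lift_main(1)[OF lcB[OF s0]] direct_ok(1) d2 by auto
    show "set (P i) \<subseteq> {(A,B,C,d),(A,B,C',d)} \<union> I i"
      unfolding P_def I_def using lift_main(2)[OF lcA, of i] lift_main(2)[OF lcB[OF s0]] direct_ok(2) d2
      by (auto split: if_splits)
  next
    fix i j assume ij: "i < 2*r+2" "j < 2*r+2" "i \<noteq> j"
    show "I i \<inter> I j = {}"
      unfolding I_def using ij nbr_inj[OF tA, of i j] nA[of i] nA[of j] nB[OF s0]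
      by (auto split: if_splits)
    show "3 \<le> length (P i) \<or> 3 \<le> length (P j)"
      unfolding P_def using lift_main(3)[OF lcA] lift_main(3)[OF lcB[OF s0]] direct_ok(3) d2 by auto
  qed
qed

lemma case1:
  assumes d1: "d = 1"
  shows "\<exists>P :: nat \<Rightarrow> e3vert list.
     (\<forall>i < 2*r+2. e3c_path r s t (A,B,C,d) (A,B,C',d) (P i) \<and> length (P i) - 1 \<le> t + 6) \<and>
     (\<forall>i < 2*r+2. \<forall>j < 2*r+2. i \<noteq> j \<longrightarrow>
        P i \<noteq> P j \<and> set (P i) \<inter> set (P j) \<subseteq> {(A,B,C,d), (A,B,C',d)})"
proof -
  have s0: "0 < 2*r" using r1 by simp
  have rs2: "i < 2*r \<Longrightarrow> i < 2*s" for i using rs by simp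
  define P where "P i = (if i < 2*r then lp d 1 A B A (nbr B i) C C' ds else if i = 2*r then direct
      else lp d 2 A B (nbr A 0) B C C' ds)" for i
  define I :: "nat \<Rightarrow> e3vert set" where "I i = (if i < 2*r then {x. fst x = A \<and> fst (snd x) = nbr B i}
      else if i = 2*r then {x. \<exists>Y. x = (A,B,Y,0)}
      else {(A,B,C,2),(A,B,C',2)} \<union> {x. fst x = nbr A 0 \<and> fst(snd x) = B})" for i
  show ?thesis
  proof (rule assemble[where I = I])
    fix i assume i: "i < 2*r+2"
    show "e3c_path r s t (A,B,C,d) (A,B,C',d) (P i) \<and> length (P i) - 1 \<le> t + 6"
      unfolding P_def using lift_main(1)[OF lcB[OF rs2]] lift_main(1)[OF lcA[OF s0]] direct_ok(1) d1 by auto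
    show "set (P i) \<subseteq> {(A,B,C,d),(A,B,C',d)} \<union> I i"
      unfolding P_def I_def using lift_main(2)[OF lcB[OF rs2], of i] lift_main(2)[OF lcA[OF s0]] direct_ok(2) d1
      by (auto split: if_splits)
  next
    fix i j assume ij: "i < 2*r+2" "j < 2*r+2" "i \<noteq> j"
    show "I i \<inter> I j = {}"
      unfolding I_def using ij nbr_inj[OF tB, of i j] nB[OF rs2, of i] nB[OF rs2, of j] nA[OF s0] rs
      by (auto split: if_splits)
    show "3 \<le> length (P i) \<or> 3 \<le> length (P j)"
      unfolding P_def using lift_main(3)[OF lcB[OF rs2]] lift_main(3)[OF lcA[OF s0]] direct_ok(3) d1 by auto
  qed
qed

end



definition vals :: "nat list" where "vals = [0,1,2]"

lemma cnt3: "(a::nat) < 3 \<Longrightarrow> b < 3 \<Longrightarrow>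
  length (filter (\<lambda>c. c \<noteq> a \<and> c \<noteq> b) vals) + (if a \<noteq> b then 1 else 0) = 2"
  by (auto simp: less3 vals_def)

context E3 begin

definition WL where "WL = filter (\<lambda>(p,c). c \<noteq> C!p \<and> c \<noteq> C'!p) (List.product [0..<t] vals)"

lemma cnt_gen: "set xs \<subseteq> {..<t} \<Longrightarrow>
  length (filter (\<lambda>(p,c). c \<noteq> C!p \<and> c \<noteq> C'!p) (List.product xs vals))
   + length (filter (\<lambda>j. C!j \<noteq> C'!j) xs) = 2 * length xs"
proof (induction xs)
  case (Cons x xs)
  have x: "x < t" using Cons.prems by auto
  have a: "C!x < 3" "C'!x < 3" using tstr_nth[OF tC x] tstr_nth[OF tC' x] .
  have e: "length (filter (\<lambda>(p,c). c \<noteq> C!p \<and> c \<noteq> C'!p) (map (Pair x) vals))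
     = length (filter (\<lambda>c. c \<noteq> C!x \<and> c \<noteq> C'!x) vals)" by (simp add: filter_map o_def)
  have IH: "length (filter (\<lambda>(p,c). c \<noteq> C!p \<and> c \<noteq> C'!p) (List.product xs vals))
   + length (filter (\<lambda>j. C!j \<noteq> C'!j) xs) = 2 * length xs" using Cons by auto
  show ?case using IH cnt3[OF a] by (cases "C!x = C'!x") (simp_all add: filter_map o_def)
qed simp

lemma WL_count: "2*t \<le> length WL + k"
proof -
  have "set [0..<t] \<subseteq> {..<t}" by auto
  from cnt_gen[OF this] show ?thesis unfolding WL_def k_def ds_def length_upt by linarith
qed

lemma WL_dist: "distinct WL" unfolding WL_def by (intro distinct_filter distinct_product) (auto simp: vals_def)

lemma WL_set: "x \<in> set WL \<Longrightarrow> fst x < t \<and> snd x < 3 \<and> snd x \<noteq> C!(fst x) \<and> snd x \<noteq> C'!(fst x)"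
  unfolding WL_def by (auto simp: vals_def)

definition wz where "wz p c = (A,B,C,0) # flat A B (C[p:=c]) (C'[p:=c]) (filter (\<lambda>j. j \<noteq> p) ds) @ [(A,B,C',0)]"

definition IW :: "nat \<Rightarrow> nat \<Rightarrow> e3vert set" where
  "IW p c = {x. \<exists>Y. x = (A,B,Y,0) \<and> Y!p = c \<and> (\<forall>j<t. j \<noteq> p \<longrightarrow> Y!j = C!j \<or> Y!j = C'!j)}"

lemma wz_ok:
  assumes p: "p < t" and c: "c < 3" "c \<noteq> C!p" "c \<noteq> C'!p"
  shows "e3c_path r s t (A,B,C,0) (A,B,C',0) (wz p c) \<and> length (wz p c) - 1 \<le> t + 6"
    "set (wz p c) \<subseteq> {(A,B,C,0),(A,B,C',0)} \<union> IW p c"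
    "3 \<le> length (wz p c)"
proof -
  have w: "wk t (C[p:=c]) (C'[p:=c]) (filter (\<lambda>j. j \<noteq> p) ds)"
    by unfold_locales (use tC tC' c lC lC' p in \<open>auto simp: set_ds dpos_def tstr_upd dist_ds nth_list_update\<close>)
  note F = flat_props[OF w tA tB]
  have Fs: "x \<in> set (flat A B (C[p:=c]) (C'[p:=c]) (filter (\<lambda>j. j \<noteq> p) ds)) \<Longrightarrow> x \<in> IW p c" for x
  proof -
    assume "x \<in> set (flat A B (C[p:=c]) (C'[p:=c]) (filter (\<lambda>j. j \<noteq> p) ds))"
    from F(3)[OF this] obtain Y where Y: "x = (A,B,Y,0)" "tstr t Y" "\<forall>j<t. Y!j = C[p:=c]!j \<or> Y!j = C'[p:=c]!j"
      by blast
    have "Y!p = c" using Y(3) p lC lC' by auto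
    moreover have "\<forall>j<t. j \<noteq> p \<longrightarrow> Y!j = C!j \<or> Y!j = C'!j" using Y(3) by auto
    ultimately show "x \<in> IW p c" using Y(1) unfolding IW_def by auto
  qed
  have nu: "(A,B,C,0) \<notin> IW p c" "(A,B,C',0) \<notin> IW p c" using c unfolding IW_def by auto
  have lf: "length (filter (\<lambda>j. j \<noteq> p) ds) \<le> t" using k_le unfolding k_def
    by (meson le_trans length_filter_le)
  have "e3c_path r s t (A,B,C,0) (A,B,C',0) (wz p c)" unfolding wz_def
  proof (rule path_ext[OF F(1)])
    show "e3c_adj r s t (A,B,C,0) (A,B,C[p:=c],0)"
      using c p lC tC by (intro adjE1 tA tB tstr_upd differ_one_upd) auto
    show "e3c_adj r s t (A,B,C'[p:=c],0) (A,B,C',0)"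
      using c p lC' tC' by (intro adjE1 tA tB tstr_upd differ_one_upd) auto
  qed (use Fs nu CC in auto)
  then show "e3c_path r s t (A,B,C,0) (A,B,C',0) (wz p c) \<and> length (wz p c) - 1 \<le> t + 6"
    using F(2) lf unfolding wz_def by auto
  show "set (wz p c) \<subseteq> {(A,B,C,0),(A,B,C',0)} \<union> IW p c" unfolding wz_def using Fs by auto
  show "3 \<le> length (wz p c)" unfolding wz_def using F(2) by simp
qed

lemma IW_disj:
  assumes "p < t" "p' < t" "c \<noteq> C!p" "c \<noteq> C'!p" "c' \<noteq> C!p'" "c' \<noteq> C'!p'" "(p,c) \<noteq> (p',c')"
  shows "IW p c \<inter> IW p' c' = {}"
  using assms unfolding IW_def by auto


definition pj where "pj j = ds ! j"
definition qj where "qj j = ds ! ((j+1) mod k)"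
definition xp where "xp j = C[pj j := C'!(pj j)]"
definition yq where "yq j = C'[qj j := C!(qj j)]"
definition xps where "xps j = filter (\<lambda>x. x \<noteq> pj j \<and> x \<noteq> qj j) ds"

lemma card_ds: "card (set ds) = k" unfolding k_def using distinct_card[OF dist_ds] .

lemma pq_in:
  assumes "j < k"
  shows "pj j \<in> set ds" "qj j \<in> set ds" "pj j < t" "qj j < t"
    "C!(pj j) \<noteq> C'!(pj j)" "C!(qj j) \<noteq> C'!(qj j)"
proof -
  have "(j+1) mod k < k" using assms by simp
  then show "pj j \<in> set ds" "qj j \<in> set ds" using assms unfolding pj_def qj_def k_def by auto
  then show "pj j < t" "qj j < t" "C!(pj j) \<noteq> C'!(pj j)" "C!(qj j) \<noteq> C'!(qj j)"
    using set_ds by auto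
qed

lemma p_ne_q: assumes "j < k" "2 \<le> k" shows "pj j \<noteq> qj j"
proof -
  have "(j+1) mod k \<noteq> j"
  proof (cases "j + 1 < k")
    case True then show ?thesis by simp
  next
    case False then have "j + 1 = k" using assms by simp
    then show ?thesis using assms by simp
  qed
  moreover have "(j+1) mod k < k" using assms by simp
  ultimately show ?thesis using assms dist_ds unfolding pj_def qj_def k_def
    by (simp add: nth_eq_iff_index_eq)
qed

lemma pj_inj: "j < k \<Longrightarrow> j' < k \<Longrightarrow> j \<noteq> j' \<Longrightarrow> pj j \<noteq> pj j'"
  unfolding pj_def k_def using dist_ds by (simp add: nth_eq_iff_index_eq)

lemma qj_inj: assumes "j < k" "j' < k" "j \<noteq> j'" shows "qj j \<noteq> qj j'"
proof -
  have "(j+1) mod k \<noteq> (j'+1) mod k"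
  proof -
    have m: "(x+1) mod k = (if x+1 = k then 0 else x+1)" if "x < k" for x
      using that by (auto simp: mod_less)
    show ?thesis using m[OF assms(1)] m[OF assms(2)] assms by auto
  qed
  moreover have "(j+1) mod k < k" "(j'+1) mod k < k" using assms by auto
  ultimately show ?thesis using dist_ds unfolding qj_def k_def
    by (simp add: nth_eq_iff_index_eq)
qed

lemma xp_nth: "x < t \<Longrightarrow> xp j ! x = (if x = pj j then C'!x else C!x)"
  unfolding xp_def using lC by (auto simp: nth_list_update)
lemma yq_nth: "x < t \<Longrightarrow> yq j ! x = (if x = qj j then C!x else C'!x)"
  unfolding yq_def using lC' by (auto simp: nth_list_update)
lemma xp_len: "length (xp j) = t" and yq_len: "length (yq j) = t"
  unfolding xp_def yq_def using lC lC' by auto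

lemma xp_t: "j < k \<Longrightarrow> tstr t (xp j)" unfolding xp_def using pq_in tC' tstr_nth
  by (intro tstr_upd tC) auto
lemma yq_t: "j < k \<Longrightarrow> tstr t (yq j)" unfolding yq_def using pq_in tC tstr_nth
  by (intro tstr_upd tC') auto

lemma xp_yq_eq:
  assumes "j < k" "j' < k" "xp j = yq j'"
  shows "set ds \<subseteq> {pj j, qj j'}" "pj j \<noteq> qj j'"
proof -
  show "set ds \<subseteq> {pj j, qj j'}"
  proof
    fix x assume x: "x \<in> set ds"
    then have "x < t" "C!x \<noteq> C'!x" using set_ds by auto
    then show "x \<in> {pj j, qj j'}" using assms(3) xp_nth[of x j] yq_nth[of x j'] by (auto split: if_splits)
  qed
  show "pj j \<noteq> qj j'"
  proof
    assume e: "pj j = qj j'"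
    have "pj j < t" "C!(pj j) \<noteq> C'!(pj j)" using pq_in assms by auto
    then show False using assms(3) xp_nth[of "pj j" j] yq_nth[of "pj j" j'] e by auto
  qed
qed

lemma xp_ne_yq:
  assumes "j < k" "j' < k" "k \<noteq> 2 \<or> j \<noteq> j'"
  shows "xp j \<noteq> yq j'"
proof
  assume E: "xp j = yq j'"
  note X = xp_yq_eq[OF assms(1,2) E]
  have c2: "card {pj j, qj j'} = 2" using X(2) by simp
  have "k \<le> 2" unfolding card_ds[symmetric] using card_mono[OF _ X(1)] c2 by simp
  have k2: "k = 2"
  proof -
    have "pj j \<in> set ds" "qj j' \<in> set ds" using pq_in assms by auto
    then have "{pj j, qj j'} \<subseteq> set ds" by auto
    then have "card {pj j, qj j'} \<le> k" unfolding card_ds[symmetric] by (intro card_mono) auto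
    then show "k = 2" using c2 \<open>k \<le> 2\<close> by simp
  qed
  then have "j \<noteq> j'" using assms by simp
  then have "(j'+1) mod k = j" using assms k2 by (cases j; cases j'; auto)
  then have "qj j' = pj j" unfolding qj_def pj_def by simp
  then show False using X(2) by simp
qed

lemma xp_eq_yq2: assumes "j < k" "k = 2" shows "xp j = yq j"
proof -
  have pq: "pj j \<noteq> qj j" using p_ne_q assms by simp
  have "{pj j, qj j} \<subseteq> set ds" using pq_in assms by auto
  moreover have "card {pj j, qj j} = 2" using pq by simp
  ultimately have S: "set ds = {pj j, qj j}" using card_ds assms
    by (metis card_subset_eq finite_set)
  show ?thesis
  proof (rule nth_equalityI)
    show "length (xp j) = length (yq j)" by (simp add: xp_len yq_len)
    fix x assume "x < length (xp j)"
    then have x: "x < t" by (simp add: xp_len)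
    show "xp j ! x = yq j ! x"
    proof (cases "x \<in> set ds")
      case True then show ?thesis using S pq xp_nth[OF x] yq_nth[OF x] by auto
    next
      case False then have "C!x = C'!x" using set_ds x by auto
      then show ?thesis using S False xp_nth[OF x] yq_nth[OF x] by auto
    qed
  qed
qed

lemma xp_ne: assumes "j < k" shows "xp j \<noteq> C" "2 \<le> k \<Longrightarrow> xp j \<noteq> C'"
proof -
  show "xp j \<noteq> C" using pq_in[OF assms] xp_nth[of "pj j" j] by auto
  assume k2: "2 \<le> k"
  have "pj j \<noteq> qj j" using p_ne_q assms k2 by simp
  then show "xp j \<noteq> C'" using pq_in[OF assms] xp_nth[of "qj j" j] by auto
qed

lemma yq_ne: assumes "j < k" shows "yq j \<noteq> C'" "2 \<le> k \<Longrightarrow> yq j \<noteq> C"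
proof -
  show "yq j \<noteq> C'" using pq_in[OF assms] yq_nth[of "qj j" j] by auto
  assume k2: "2 \<le> k"
  have "pj j \<noteq> qj j" using p_ne_q assms k2 by simp
  then show "yq j \<noteq> C" using pq_in[OF assms] yq_nth[of "pj j" j] by auto
qed

lemma xp_inj: assumes "j < k" "j' < k" "j \<noteq> j'" shows "xp j \<noteq> xp j'"
proof -
  have "pj j \<noteq> pj j'" using pj_inj assms by simp
  moreover have "pj j < t" "C!(pj j) \<noteq> C'!(pj j)" using pq_in assms by auto
  ultimately have "xp j ! pj j \<noteq> xp j' ! pj j" using xp_nth by simp
  then show ?thesis by metis
qed

lemma yq_inj: assumes "j < k" "j' < k" "j \<noteq> j'" shows "yq j \<noteq> yq j'"
proof -
  have "qj j \<noteq> qj j'" using qj_inj assms by simp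
  moreover have "qj j < t" "C!(qj j) \<noteq> C'!(qj j)" using pq_in assms by auto
  ultimately have "yq j ! qj j \<noteq> yq j' ! qj j" using yq_nth by simp
  then show ?thesis by metis
qed


definition xpath where "xpath j = (if k = 1 then [(A,B,C,0),(A,B,C',0)]
   else if k = 2 then [(A,B,C,0),(A,B,xp j,0),(A,B,C',0)]
   else (A,B,C,0) # lp 0 2 A B (nbr A (j+1)) B (xp j) (yq j) (xps j) @ [(A,B,C',0)])"

definition IX :: "nat \<Rightarrow> e3vert set" where "IX j = (if k = 1 then {} else
   {(A,B,xp j,0),(A,B,yq j,0),(A,B,xp j,2),(A,B,yq j,2)} \<union> {x. fst x = nbr A (j+1) \<and> fst (snd x) = B})"

lemma xps_len: assumes "j < k" "2 \<le> k" shows "length (xps j) = k - 2"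
proof -
  have "length (xps j) = card (set (xps j))" using dist_ds distinct_card[of "xps j"] unfolding xps_def
    by simp
  also have "set (xps j) = set ds - {pj j, qj j}" unfolding xps_def by auto
  also have "card \<dots> = k - 2" using card_ds pq_in[OF assms(1)] p_ne_q[OF assms]
    by (simp add: card_Diff_subset)
  finally show ?thesis .
qed

lemma adj_C_xp: "j < k \<Longrightarrow> e3c_adj r s t (A,B,C,0) (A,B,xp j,0)"
  unfolding xp_def using pq_in lC
  by (intro adjE1 tA tB tC xp_t[unfolded xp_def] differ_one_upd) auto

lemma adj_yq_C': assumes j: "j < k" shows "e3c_adj r s t (A,B,yq j,0) (A,B,C',0)"
proof -
  have "C'!(qj j) \<noteq> C!(qj j)" "qj j < length C'" using pq_in[OF j] lC' by auto
  then have "differ_one (yq j) C'" unfolding yq_def using differ_one_upd(2)[of "qj j" C' "C!(qj j)"] by simp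
  then show ?thesis by (intro adjE1 tA tB tC' yq_t j)
qed

lemma xpath_ok:
  assumes j: "j < k" and j2: "j + 1 < 2*r"
  shows "e3c_path r s t (A,B,C,0) (A,B,C',0) (xpath j) \<and> length (xpath j) - 1 \<le> t + 6"
    "set (xpath j) \<subseteq> {(A,B,C,0),(A,B,C',0)} \<union> IX j"
    "k \<noteq> 1 \<Longrightarrow> 3 \<le> length (xpath j)"
proof -
  have vs: "(A,B,C,0) \<in> e3c_vertices r s t" "(A,B,C',0) \<in> e3c_vertices r s t"
    "(A,B,xp j,0) \<in> e3c_vertices r s t"
    using tA tB tC tC' xp_t[OF j] by (auto simp: vert_iff)
  have "e3c_path r s t (A,B,C,0) (A,B,C',0) (xpath j) \<and> length (xpath j) - 1 \<le> t + 6 \<and>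
    set (xpath j) \<subseteq> {(A,B,C,0),(A,B,C',0)} \<union> IX j \<and> (k \<noteq> 1 \<longrightarrow> 3 \<le> length (xpath j))"
  proof (cases "k = 1")
    case True
    have "differ_one C C'"
    proof -
      have "{i. i < length C \<and> C!i \<noteq> C'!i} = set ds" using set_ds lC by auto
      then show ?thesis unfolding differ_one_def using card_ds True lC lC' by simp
    qed
    then have "e3c_adj r s t (A,B,C,0) (A,B,C',0)" by (intro adjE1 tA tB tC tC')
    then show ?thesis unfolding xpath_def e3c_path_alt using True vs CC k_le by auto
  next
    case False
    show ?thesis
    proof (cases "k = 2")
      case True
      have e: "xp j = yq j" using xp_eq_yq2 j True by simp
      have a1: "e3c_adj r s t (A,B,C,0) (A,B,xp j,0)" using adj_C_xp j .
      have a2: "e3c_adj r s t (A,B,xp j,0) (A,B,C',0)" using adj_yq_C' j e by simp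
      have n: "xp j \<noteq> C" "xp j \<noteq> C'" using xp_ne j True by auto
      show ?thesis unfolding xpath_def e3c_path_alt IX_def using True vs CC k_le a1 a2 n st r1 by auto
    next
      case k3: False
      then have k3': "3 \<le> k" using False k_pos by simp
      have w: "wk t (xp j) (yq j) (xps j)"
      proof
        show "tstr t (xp j)" "tstr t (yq j)" using xp_t yq_t j by auto
        show "distinct (xps j)" unfolding xps_def using dist_ds by simp
        show "set (xps j) = dpos (xp j) (yq j)"
          unfolding xps_def dpos_def xp_len using set_ds xp_nth yq_nth p_ne_q[OF j] k3'
          by (auto split: if_splits)
      qed
      have ne: "xp j \<noteq> yq j" using xp_ne_yq j k3 by simp
      note L = lp_props[OF lcA[OF j2] tA tB w ne, of 0]
      have nA': "nbr A (j+1) \<noteq> A" using nA j2 by simp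
      have sub: "set (lp 0 2 A B (nbr A (j+1)) B (xp j) (yq j) (xps j)) \<subseteq> IX j"
        using L(3) k3 False unfolding IX_def by auto
      have nu: "(A,B,C,0) \<notin> IX j" "(A,B,C',0) \<notin> IX j"
        unfolding IX_def using xp_ne(1)[OF j] xp_ne(2)[OF j] yq_ne(1)[OF j] yq_ne(2)[OF j] k3' nA' by auto
      have xe: "xpath j = (A,B,C,0) # lp 0 2 A B (nbr A (j+1)) B (xp j) (yq j) (xps j) @ [(A,B,C',0)]"
        unfolding xpath_def using False k3 by simp
      have P: "e3c_path r s t (A,B,C,0) (A,B,C',0) (xpath j)"
        unfolding xe by (rule path_ext[OF L(1) adj_C_xp[OF j] adj_yq_C'[OF j]]) (use sub nu CC in auto)
      have "length (xps j) = k - 2" using xps_len j k3' by simp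
      then have "length (xpath j) - 1 \<le> t + 6" using L(2) k_le k3' unfolding xpath_def using False k3 by simp
      moreover have "set (xpath j) \<subseteq> {(A,B,C,0),(A,B,C',0)} \<union> IX j"
        unfolding xpath_def using False k3 sub by auto
      moreover have "3 \<le> length (xpath j)" unfolding xpath_def using False k3 by (simp add: lp_def)
      ultimately show ?thesis using P by simp
    qed
  qed
  then show "e3c_path r s t (A,B,C,0) (A,B,C',0) (xpath j) \<and> length (xpath j) - 1 \<le> t + 6"
    "set (xpath j) \<subseteq> {(A,B,C,0),(A,B,C',0)} \<union> IX j"
    "k \<noteq> 1 \<Longrightarrow> 3 \<le> length (xpath j)" by auto
qed


definition V1 :: "e3vert set" where "V1 = {(A,B,C,1),(A,B,C',1)} \<union> {x. fst x = A \<and> fst (snd x) = nbr B 0}"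
definition V2 :: "e3vert set" where "V2 = {(A,B,C,2),(A,B,C',2)} \<union> {x. fst x = nbr A 0 \<and> fst (snd x) = B}"

lemma s0: "0 < 2*s" and r0: "0 < 2*r" using r1 rs by auto

lemma nA0: "nbr A 0 \<noteq> A" using nA r0 by simp
lemma nB0: "nbr B 0 \<noteq> B" using nB s0 by simp

lemma V12: "V1 \<inter> V2 = {}" unfolding V1_def V2_def using nA0 nB0 by auto
lemma V1W: "V1 \<inter> IW p c = {}" unfolding V1_def IW_def using nB0 by auto
lemma V2W: "V2 \<inter> IW p c = {}" unfolding V2_def IW_def using nA0 by auto
lemma V1X: "j < k \<Longrightarrow> j + 1 < 2*r \<Longrightarrow> V1 \<inter> IX j = {}"
  unfolding V1_def IX_def using nB0 nA[of "j+1"] by auto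
lemma V2X: assumes "j < k" "j + 1 < 2*r" shows "V2 \<inter> IX j = {}"
proof (cases "k = 1")
  case False
  then have k2: "2 \<le> k" using k_pos by simp
  have "nbr A 0 \<noteq> nbr A (j+1)" using nbr_inj[OF tA, of 0 "j+1"] assms r0 by simp
  then show ?thesis unfolding V2_def IX_def using False nA[of "j+1"] assms nA0
      xp_ne(1)[OF assms(1)] xp_ne(2)[OF assms(1) k2] yq_ne(1)[OF assms(1)] yq_ne(2)[OF assms(1) k2]
    by auto
qed (simp add: IX_def)

lemma WX: assumes "j < k" "j + 1 < 2*r" "p < t" "c \<noteq> C!p" "c \<noteq> C'!p"
  shows "IW p c \<inter> IX j = {}"
proof -
  have "xp j ! p \<noteq> c" "yq j ! p \<noteq> c" using xp_nth[OF assms(3)] yq_nth[OF assms(3)] assms by auto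
  then show ?thesis unfolding IW_def IX_def using nA[of "j+1"] assms by auto
qed

lemma XX: assumes "j < k" "j + 1 < 2*r" "j' < k" "j' + 1 < 2*r" "j \<noteq> j'"
  shows "IX j \<inter> IX j' = {}"
proof (cases "k = 1")
  case False
  have "nbr A (j+1) \<noteq> nbr A (j'+1)" using nbr_inj[OF tA, of "j+1" "j'+1"] assms by simp
  moreover have "xp j \<noteq> xp j'" "yq j \<noteq> yq j'" "xp j \<noteq> yq j'" "xp j' \<noteq> yq j"
    using xp_inj yq_inj xp_ne_yq assms by auto
  ultimately show ?thesis unfolding IX_def using False nA[of "j+1"] nA[of "j'+1"] assms by auto
qed (simp add: IX_def)

lemma case0:
  assumes d0: "d = 0"
  shows "\<exists>P :: nat \<Rightarrow> e3vert list.
     (\<forall>i < 2*r+2. e3c_path r s t (A,B,C,d) (A,B,C',d) (P i) \<and> length (P i) - 1 \<le> t + 6) \<and>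
     (\<forall>i < 2*r+2. \<forall>j < 2*r+2. i \<noteq> j \<longrightarrow>
        P i \<noteq> P j \<and> set (P i) \<inter> set (P j) \<subseteq> {(A,B,C,d), (A,B,C',d)})"
proof -
  define nW where "nW = length WL"
  have cnt: "2*t \<le> nW + k" using WL_count unfolding nW_def by simp
  have tr: "r \<le> t" using rs st by simp
  have kt: "k \<le> t" using k_le .
  have xj: "i - 2 - nW < k \<and> i - 2 - nW + 1 < 2*r" if "i < 2*r+2" "\<not> i - 2 < nW" for i
    using that cnt tr kt r1 by linarith
  have wl: "i - 2 < nW \<Longrightarrow> fst (WL!(i-2)) < t \<and> snd (WL!(i-2)) < 3 \<and>
      snd (WL!(i-2)) \<noteq> C!(fst (WL!(i-2))) \<and> snd (WL!(i-2)) \<noteq> C'!(fst (WL!(i-2)))" for i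
    using WL_set[of "WL!(i-2)"] unfolding nW_def by simp
  define P where "P i = (if i = 0 then lp 0 1 A B A (nbr B 0) C C' ds
     else if i = 1 then lp 0 2 A B (nbr A 0) B C C' ds
     else if i - 2 < nW then wz (fst (WL!(i-2))) (snd (WL!(i-2)))
     else xpath (i - 2 - nW))" for i
  define I where "I i = (if i = 0 then V1 else if i = 1 then V2
     else if i - 2 < nW then IW (fst (WL!(i-2))) (snd (WL!(i-2)))
     else IX (i - 2 - nW))" for i
  show ?thesis unfolding d0
  proof (rule assemble[where I = I])
    fix i assume i: "i < 2*r+2"
    show "e3c_path r s t (A,B,C,0) (A,B,C',0) (P i) \<and> length (P i) - 1 \<le> t + 6"
    proof -
      consider "i = 0" | "i = 1" | "i \<noteq> 0" "i \<noteq> 1" "i - 2 < nW" | "i \<noteq> 0" "i \<noteq> 1" "\<not> i - 2 < nW" by blast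
      then show ?thesis
      proof cases
        case 1 then show ?thesis unfolding P_def using lift_main(1)[OF lcB[OF s0]] d0 by simp
      next
        case 2 then show ?thesis unfolding P_def using lift_main(1)[OF lcA[OF r0]] d0 by simp
      next
        case 3 then show ?thesis unfolding P_def using wz_ok(1) wl[of i] by simp
      next
        case 4 then show ?thesis unfolding P_def using xpath_ok(1) xj[OF i] by simp
      qed
    qed
    show "set (P i) \<subseteq> {(A,B,C,0),(A,B,C',0)} \<union> I i"
    proof -
      consider "i = 0" | "i = 1" | "i \<noteq> 0" "i \<noteq> 1" "i - 2 < nW" | "i \<noteq> 0" "i \<noteq> 1" "\<not> i - 2 < nW" by blast
      then show ?thesis
      proof cases
        case 1 then show ?thesis unfolding P_def I_def V1_def using lift_main(2)[OF lcB[OF s0]] d0 by auto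
      next
        case 2 then show ?thesis unfolding P_def I_def V2_def using lift_main(2)[OF lcA[OF r0]] d0 by auto
      next
        case 3 then show ?thesis unfolding P_def I_def using wz_ok(2) wl[of i] by simp
      next
        case 4 then show ?thesis unfolding P_def I_def using xpath_ok(2) xj[OF i] by simp
      qed
    qed
  next
    fix i j assume ij: "i < 2*r+2" "j < 2*r+2" "i \<noteq> j"
    have W2: "IW (fst (WL!(a-2))) (snd (WL!(a-2))) \<inter> IW (fst (WL!(b-2))) (snd (WL!(b-2))) = {}"
      if "a - 2 < nW" "b - 2 < nW" "a \<noteq> b" "a \<noteq> 0" "a \<noteq> 1" "b \<noteq> 0" "b \<noteq> 1" for a b
    proof -
      have "a - 2 \<noteq> b - 2" using that by simp
      then have "WL!(a-2) \<noteq> WL!(b-2)" using WL_dist that unfolding nW_def by (simp add: nth_eq_iff_index_eq)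
      then show ?thesis using IW_disj wl[of a] wl[of b] that by (simp add: prod_eq_iff)
    qed
    have D: "I a \<inter> I b = {}" if ab: "a < 2*r+2" "b < 2*r+2" "a < b" for a b
    proof -
      consider "a = 0" | "a = 1" | "a \<noteq> 0" "a \<noteq> 1" "a - 2 < nW" | "a \<noteq> 0" "a \<noteq> 1" "\<not> a - 2 < nW" by blast
      then show ?thesis
      proof cases
        case 1
        consider "b = 1" | "b \<noteq> 0" "b \<noteq> 1" "b - 2 < nW" | "b \<noteq> 0" "b \<noteq> 1" "\<not> b - 2 < nW" using ab 1 by blast
        then show ?thesis
        proof cases
          case 1 then show ?thesis using \<open>a = 0\<close> unfolding I_def using V12 by simp
        next
          case 2 then show ?thesis using \<open>a = 0\<close> unfolding I_def using V1W by simp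
        next
          case 3 then show ?thesis using \<open>a = 0\<close> unfolding I_def using V1X xj[OF ab(2)] by simp
        qed
      next
        case 2
        consider "b \<noteq> 0" "b \<noteq> 1" "b - 2 < nW" | "b \<noteq> 0" "b \<noteq> 1" "\<not> b - 2 < nW" using ab 2 by linarith
        then show ?thesis
        proof cases
          case 1 then show ?thesis using \<open>a = 1\<close> unfolding I_def using V2W by simp
        next
          case 2 then show ?thesis using \<open>a = 1\<close> unfolding I_def using V2X xj[OF ab(2)] by simp
        qed
      next
        case 3
        have b01: "b \<noteq> 0" "b \<noteq> 1" using 3 ab by auto
        show ?thesis
        proof (cases "b - 2 < nW")
          case True then show ?thesis using 3 b01 W2[of a b] ab unfolding I_def by simp
        next
          case False then show ?thesis using 3 b01 WX xj[OF ab(2)] wl[of a] ab unfolding I_def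
            by (simp add: Int_commute)
        qed
      next
        case 4
        have b01: "b \<noteq> 0" "b \<noteq> 1" "\<not> b - 2 < nW" using 4 ab by auto
        have "a - 2 - nW \<noteq> b - 2 - nW" using 4 ab by auto
        then show ?thesis using 4 b01 XX xj[OF ab(1)] xj[OF ab(2)] unfolding I_def by simp
      qed
    qed
    show "I i \<inter> I j = {}"
    proof (cases "i < j")
      case True then show ?thesis using D ij by simp
    next
      case False then have "j < i" using ij by simp
      then have "I j \<inter> I i = {}" using D ij by simp
      then show ?thesis by (simp add: Int_commute)
    qed
    show "3 \<le> length (P i) \<or> 3 \<le> length (P j)"
    proof -
      have L: "3 \<le> length (P a)" if "a < 2*r+2" "k \<noteq> 1 \<or> a < 2 \<or> a - 2 < nW" for a
        unfolding P_def using that lift_main(3)[OF lcB[OF s0]] lift_main(3)[OF lcA[OF r0]]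
          wz_ok(3) wl[of a] xpath_ok(3) xj[of a] d0 by auto
      show ?thesis
      proof (cases "k = 1")
        case True
        then have "\<not> (\<not> i < 2 \<and> \<not> i - 2 < nW \<and> \<not> j < 2 \<and> \<not> j - 2 < nW)"
          using xj[OF ij(1)] xj[OF ij(2)] ij by auto
        then show ?thesis using L ij by blast
      qed (use L ij in auto)
    qed
  qed
qed

end

theorem lemma7_main:
  fixes r s t :: nat and A B C C' :: "nat list" and d :: nat
  assumes "1 \<le> r" "r \<le> s" "s \<le> t"
    and "(A,B,C,d) \<in> e3c_vertices r s t" "(A,B,C',d) \<in> e3c_vertices r s t"
    and "(A,B,C,d) \<noteq> (A,B,C',d)"
  shows "\<exists>P :: nat \<Rightarrow> e3vert list.
     (\<forall>i < 2*r+2. e3c_path r s t (A,B,C,d) (A,B,C',d) (P i) \<and> length (P i) - 1 \<le> t + 6) \<and>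
     (\<forall>i < 2*r+2. \<forall>j < 2*r+2. i \<noteq> j \<longrightarrow>
        P i \<noteq> P j \<and> set (P i) \<inter> set (P j) \<subseteq> {(A,B,C,d), (A,B,C',d)})"
proof -
  interpret E3 r s t A B C C' d
    using assms by unfold_locales (auto simp: vert_iff)
  have "d = 0 \<or> d = 1 \<or> d = 2" using dl by auto
  then show ?thesis using case0 case1 case2 by blast
qed



theorem lemma7:
  fixes r s t :: nat and A B C C' :: "nat list" and d :: nat
  assumes "1 \<le> r" "r \<le> s" "s \<le> t"
    and "(A,B,C,d) \<in> e3c_vertices r s t" "(A,B,C',d) \<in> e3c_vertices r s t"
    and "(A,B,C,d) \<noteq> (A,B,C',d)"
  shows "\<exists>P :: nat \<Rightarrow> e3vert list.
     (\<forall>i < 2*r+2. e3c_path r s t (A,B,C,d) (A,B,C',d) (P i) \<and> length (P i) - 1 \<le> t + 6) \<and>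
     (\<forall>i < 2*r+2. \<forall>j < 2*r+2. i \<noteq> j \<longrightarrow>
        P i \<noteq> P j \<and> set (P i) \<inter> set (P j) \<subseteq> {(A,B,C,d), (A,B,C',d)})"
  using lemma7_main[OF assms] .

end
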